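(* Let $h\in\{2,\dots,H\}$, $\alpha\in(0,1)$ and $\eta>0$. If a finitely supported distribution $P$ over $\Pi_{\mathrm{M}}$ is an $(\alpha,\eta)$-randomized policy cover relative to $\bar\Pi_\eta$ for layer $h$ in the extended MDP $\bar{\mathcal{M}}$, then $P$ is an $(\alpha/2,\varepsilon)$-randomized policy cover for layer $h$ in the true MDP $\mathcal{M}$, where $\varepsilon:=4Hd^{3/2}\eta$.
   Context: Setting (Low-Rank MDP). Fix horizon $H\in\mathbb{N}$, dimension $d\in\mathbb{N}$, a finite action set $\mathcal{A}$ with $|\mathcal{A}|=A$, and a measurable state space $\mathcal{X}=\mathcal{X}_1\sqcup\cdots\sqcup\mathcal{X}_H$ (disjoint layers) carrying a $\sigma$-finite measure $\nu$. The MDP $\mathcal{M}$ has an initial distribution $\rho$ on $\mathcal{X}_1$ and, for each $h\in[H-1]$, measurable maps $\phi^\star_h:\mathcal{X}_h\times\mathcal{A}\to\mathbb{R}^d$ and $\mu^\star_{h+1}:\mathcal{X}_{h+1}\to\mathbb{R}^d$ such that for every $(x,a)\in\mathcal{X}_h\times\mathcal{A}$ the function $x'\mapsto\mu^\star_{h+1}(x')^\top\phi^\star_h(x,a)$ is a probability density w.r.t. $\nu$ on $\mathcal{X}_{h+1}$; this density is the transition kernel $T_h(\cdot\mid x,a)$. $\Pi_{\mathrm{M}}$ denotes the set of randomized Markov policies $\pi:\mathcal{X}\to\Delta(\mathcal{A})$; an episode under $\pi$ draws $x_1\sim\rho$, $a_h\sim\pi(x_h)$, $x_{h+1}\sim T_h(\cdot\mid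 x_h,a_h)$. For $h\ge2$ and $x\in\mathcal{X}_h$, $d^\pi(x)$ denotes the density w.r.t. $\nu$ of the law of $x_h$ under $\pi$. Normalization: $\|\phi^\star_h(x,a)\|\le 1$ for all $h,x,a$, and $\|\int_{\mathcal{X}_h}\mu^\star_h(x)g(x)\,d\nu(x)\|\le\sqrt d$ for every measurable $g:\mathcal{X}_h\to[0,1]$. $\|\cdot\|$ is the Euclidean norm. Randomized policy cover (true MDP): $P$ is an $(\alpha,\varepsilon)$-randomized policy cover for layer $h$ if $\mathbb{E}_{\pi\sim P}[d^\pi(x)]\ge\alpha\sup_{\pi'\in\Pi_{\mathrm{M}}}d^{\pi'}(x)$ for all $x\in\mathcal{X}_h$ with $\sup_{\pi'\in\Pi_{\mathrm{M}}}d^{\pi'}(x)\ge\varepsilon\|\mu^\star_h(x)\|$. Extended MDP $\bar{\mathcal{M}}$: add terminal states $\mathfrak{t}_1,\dots,\mathfrak{t}_H$ (with $\bar{\mathcal{X}}_h=\mathcal{X}_h\cup\{\mathfrak{t}_h\}$) and a terminal action $\mathfrak{a}$ (with $\bar{\mathcal{A}}=\mathcal{A}\cup\{\mathfrak{a}\}$). Transitions from $(x,a)\in\mathcal{X}_h\times\mathcal{A}$ are as in $\mathcal{M}$; taking $\mathfrak{a}$ in any state of layer $h$, or any action in $\mathfrak{t}_h$, leads deterministically to $\mathfrak{t}_{h+1}$; the initial distribution is $\rho$. The base measure is $\bar\nu=\nu+\sum_h\delta_{\mathfrak{t}_h}$, and for $x\in\bar{\mathcal{X}}_h$, $\bar d^\pi(x)$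 is the density w.r.t. $\bar\nu$ of the law of $x_h$ under $\pi$ in $\bar{\mathcal{M}}$. $\bar\Pi_{\mathrm{M}}$ is the set of randomized Markov policies of $\bar{\mathcal{M}}$ (with $\pi(\mathfrak{t}_h)=\mathfrak{a}$); policies of $\Pi_{\mathrm{M}}$ are viewed as elements of $\bar\Pi_{\mathrm{M}}$ that never play $\mathfrak{a}$ on $\mathcal{X}$ (for them $\bar d^\pi=d^\pi$ on $\mathcal{X}$). For $x\in\mathcal{X}_h$, $\|\bar\mu^\star_h(x)\|=\|\mu^\star_h(x)\|$. Reachable states: for $h\ge2$ and $\Pi'\subseteq\bar\Pi_{\mathrm{M}}$, $\mathcal{X}_{h,\eta}(\Pi'):=\{x\in\mathcal{X}_h:\exists\pi\in\Pi',\ \bar d^\pi(x)\ge\eta\|\mu^\star_h(x)\|\}$; by convention $\mathcal{X}_{1,\eta}(\Pi')=\mathcal{X}_1$. Truncated policy class: $\bar\Pi_{0,\eta}=\bar\Pi_{\mathrm{M}}$ and for $h\ge1$, $\pi\in\bar\Pi_{h,\eta}$ iff there exists $\pi'\in\bar\Pi_{h-1,\eta}$ with $\pi(x)=\pi'(x)$ for all $x$ in layers $t\neq h$, and for $x\in\mathcal{X}_h$: $\pi(x)=\pi'(x)$ if $x\in\mathcal{X}_{h,\eta}(\bar\Pi_{h-1,\eta})$ and $\pi(x)=\mathfrak{a}$ otherwise (and $\pi(\mathfrak{t}_h)=\mathfrak{a}$). Set $\bar\Pi_\eta:=\bar\Pi_{H,\eta}$. Relative policy cover: $P$ is an $(\alpha,\eta)$-randomized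 policy cover relative to $\Pi\subseteq\bar\Pi_{\mathrm{M}}$ for layer $h$ in $\bar{\mathcal{M}}$ if $\mathbb{E}_{\pi\sim P}[\bar d^\pi(x)]\ge\alpha\sup_{\pi'\in\Pi}\bar d^{\pi'}(x)$ for all $x\in\mathcal{X}_h$ with $\sup_{\pi'\in\Pi}\bar d^{\pi'}(x)\ge\eta\|\mu^\star_h(x)\|$. *)

theory Defs
  imports "HOL-Probability.Probability"
begin

text \<open>States have type 'x, actions type 'a, the feature dimension is d = CARD('d). The terminal action of the extended MDP is encoded as None, a real action a
  as Some a; extended policies map states to distributions over 'a option.
  Terminal states are not represented explicitly: they only ever play the terminal
  action, and the densities on non-terminal states do not depend on them.\<close>

record ('x, 'a, 'd::finite) lr_mdp =
  horizon :: nat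
  acts :: "'a set"
  base :: "'x measure"
  init :: "'x measure"
  layer :: "'x \<Rightarrow> nat"
  phi :: "nat \<Rightarrow> 'x \<Rightarrow> 'a \<Rightarrow> real ^ 'd"
  mu :: "nat \<Rightarrow> 'x \<Rightarrow> real ^ 'd"

definition layer_set :: "('x, 'a, 'd::finite) lr_mdp \<Rightarrow> nat \<Rightarrow> 'x set" where
  "layer_set M h = {x \<in> space (base M). layer M x = h}"

definition low_rank_mdp :: "('x, 'a, 'd::finite) lr_mdp \<Rightarrow> bool" where
  "low_rank_mdp M \<longleftrightarrow>
     finite (acts M) \<and> acts M \<noteq> {} \<and>
     sigma_finite_measure (base M) \<and>
     (\<forall>x\<in>space (base M). layer M x \<in> {1..horizon M}) \<and>
     (\<forall>h. layer_set M h \<in> sets (base M)) \<and>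
     sets (init M) = sets (base M) \<and> prob_space (init M) \<and>
     emeasure (init M) (layer_set M 1) = 1 \<and>
     (\<forall>h\<in>{1..<horizon M}. \<forall>a\<in>acts M.
        (\<lambda>x. indicator (layer_set M h) x *\<^sub>R phi M h x a) \<in> borel_measurable (base M)) \<and>
     (\<forall>h\<in>{2..horizon M}.
        (\<lambda>x. indicator (layer_set M h) x *\<^sub>R mu M h x) \<in> borel_measurable (base M)) \<and>
     (\<forall>h\<in>{1..<horizon M}. \<forall>x\<in>layer_set M h. \<forall>a\<in>acts M.
        (\<forall>x'\<in>layer_set M (Suc h). 0 \<le> mu M (Suc h) x' \<bullet> phi M h x a) \<and>
        (\<integral>\<^sup>+x'\<in>layer_set M (Suc h). ennreal (mu M (Suc h) x' \<bullet> phi M h x a) \<partial>base M) = 1) \<and>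
     (\<forall>h\<in>{1..<horizon M}. \<forall>x\<in>layer_set M h. \<forall>a\<in>acts M. norm (phi M h x a) \<le> 1) \<and>
     (\<forall>h\<in>{2..horizon M}. \<forall>g\<in>borel_measurable (base M).
        (\<forall>x\<in>layer_set M h. 0 \<le> g x \<and> g x \<le> 1) \<longrightarrow>
        integrable (base M) (\<lambda>x. (indicator (layer_set M h) x * g x) *\<^sub>R mu M h x) \<and>
        norm (\<integral>x. (indicator (layer_set M h) x * g x) *\<^sub>R mu M h x \<partial>base M)
          \<le> sqrt (real CARD('d)))"

definition markov_policy :: "('x, 'a, 'd::finite) lr_mdp \<Rightarrow> ('x \<Rightarrow> 'a \<Rightarrow> real) \<Rightarrow> bool" where
  "markov_policy M \<pi> \<longleftrightarrow>
     (\<forall>x\<in>space (base M). (\<forall>a\<in>acts M. 0 \<le> \<pi> x a) \<and> (\<Sum>a\<in>acts M. \<pi> x a) = 1) \<and>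
     (\<forall>a\<in>acts M. (\<lambda>x. \<pi> x a) \<in> borel_measurable (base M))"

definition ext_policy :: "('x, 'a, 'd::finite) lr_mdp \<Rightarrow> ('x \<Rightarrow> 'a option \<Rightarrow> real) \<Rightarrow> bool" where
  "ext_policy M \<pi> \<longleftrightarrow>
     (\<forall>x\<in>space (base M). (\<forall>b\<in>insert None (Some ` acts M). 0 \<le> \<pi> x b) \<and>
        (\<Sum>b\<in>insert None (Some ` acts M). \<pi> x b) = 1) \<and>
     (\<forall>b\<in>insert None (Some ` acts M). (\<lambda>x. \<pi> x b) \<in> borel_measurable (base M))"

definition embed_policy :: "('x \<Rightarrow> 'a \<Rightarrow> real) \<Rightarrow> ('x \<Rightarrow> 'a option \<Rightarrow> real)" where
  "embed_policy \<pi> = (\<lambda>x b. case b of None \<Rightarrow> 0 | Some a \<Rightarrow> \<pi> x a)"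

definition term_action :: "'a option \<Rightarrow> real" where
  "term_action = (\<lambda>b. if b = None then 1 else 0)"

text \<open>Occupancy density (w.r.t. the base measure) of layer h \<ge> 2 under an extended policy,
  evaluated at non-terminal states of layer h.  The transition density is
  x' \<mapsto> mu_{h+1}(x')^T phi_h(x,a); mass sent through the terminal action never returns.\<close>

fun occ :: "('x, 'a, 'd::finite) lr_mdp \<Rightarrow> ('x \<Rightarrow> 'a option \<Rightarrow> real) \<Rightarrow> nat \<Rightarrow> 'x \<Rightarrow> ennreal" where
  "occ M \<pi> (Suc (Suc 0)) x' =
     (\<integral>\<^sup>+x\<in>layer_set M 1. (\<Sum>a\<in>acts M. ennreal (\<pi> x (Some a)) *
        ennreal (mu M 2 x' \<bullet> phi M 1 x a)) \<partial>init M)"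
| "occ M \<pi> (Suc (Suc (Suc k))) x' =
     (\<integral>\<^sup>+x\<in>layer_set M (Suc (Suc k)). occ M \<pi> (Suc (Suc k)) x *
        (\<Sum>a\<in>acts M. ennreal (\<pi> x (Some a)) *
           ennreal (mu M (Suc (Suc (Suc k))) x' \<bullet> phi M (Suc (Suc k)) x a)) \<partial>base M)"
| "occ M \<pi> _ x' = 0"

definition reach :: "('x, 'a, 'd::finite) lr_mdp \<Rightarrow> ('x \<Rightarrow> 'a option \<Rightarrow> real) set
    \<Rightarrow> nat \<Rightarrow> real \<Rightarrow> 'x set" where
  "reach M Ps h \<eta> =
     (if h = 1 then layer_set M 1
      else {x \<in> layer_set M h. \<exists>\<pi>\<in>Ps. ennreal (\<eta> * norm (mu M h x)) \<le> occ M \<pi> h x})"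

fun trunc_class :: "('x, 'a, 'd::finite) lr_mdp \<Rightarrow> real \<Rightarrow> nat
    \<Rightarrow> ('x \<Rightarrow> 'a option \<Rightarrow> real) set" where
  "trunc_class M \<eta> 0 = {\<pi>. ext_policy M \<pi>}"
| "trunc_class M \<eta> (Suc h) =
     {\<pi>. \<exists>\<pi>'\<in>trunc_class M \<eta> h.
        (\<forall>x\<in>space (base M). layer M x \<noteq> Suc h \<longrightarrow> \<pi> x = \<pi>' x) \<and>
        (\<forall>x\<in>layer_set M (Suc h).
           \<pi> x = (if x \<in> reach M (trunc_class M \<eta> h) (Suc h) \<eta> then \<pi>' x else term_action))}"

definition trunc_policies :: "('x, 'a, 'd::finite) lr_mdp \<Rightarrow> real \<Rightarrow> ('x \<Rightarrow> 'a option \<Rightarrow> real) set" where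
  "trunc_policies M \<eta> = trunc_class M \<eta> (horizon M)"

definition rel_policy_cover :: "('x, 'a, 'd::finite) lr_mdp \<Rightarrow> ('x \<Rightarrow> 'a option \<Rightarrow> real) pmf
    \<Rightarrow> real \<Rightarrow> real \<Rightarrow> ('x \<Rightarrow> 'a option \<Rightarrow> real) set \<Rightarrow> nat \<Rightarrow> bool" where
  "rel_policy_cover M Q \<alpha> \<eta> Ps h \<longleftrightarrow>
     (\<forall>x\<in>layer_set M h.
        ennreal (\<eta> * norm (mu M h x)) \<le> (SUP \<pi>'\<in>Ps. occ M \<pi>' h x) \<longrightarrow>
        ennreal \<alpha> * (SUP \<pi>'\<in>Ps. occ M \<pi>' h x) \<le> (\<integral>\<^sup>+\<pi>. occ M \<pi> h x \<partial>measure_pmf Q))"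

definition policy_cover :: "('x, 'a, 'd::finite) lr_mdp \<Rightarrow> ('x \<Rightarrow> 'a \<Rightarrow> real) pmf
    \<Rightarrow> real \<Rightarrow> real \<Rightarrow> nat \<Rightarrow> bool" where
  "policy_cover M P \<alpha> \<epsilon> h \<longleftrightarrow>
     (\<forall>x\<in>layer_set M h.
        ennreal (\<epsilon> * norm (mu M h x))
          \<le> (SUP \<pi>'\<in>{\<pi>. markov_policy M \<pi>}. occ M (embed_policy \<pi>') h x) \<longrightarrow>
        ennreal \<alpha> * (SUP \<pi>'\<in>{\<pi>. markov_policy M \<pi>}. occ M (embed_policy \<pi>') h x)
          \<le> (\<integral>\<^sup>+\<pi>. occ M (embed_policy \<pi>) h x \<partial>measure_pmf P))"

end

theory Submission
  imports Defs
begin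

locale lrm =
  fixes M :: "('x, 'a, 'd::finite) lr_mdp"
  assumes lr: "low_rank_mdp M"
begin

abbreviation "BM \<equiv> base M"
abbreviation "IM \<equiv> init M"
abbreviation "HH \<equiv> horizon M"
abbreviation "AA \<equiv> acts M"
abbreviation "LS \<equiv> layer_set M"

lemma finA: "finite AA" using lr unfolding low_rank_mdp_def by auto
lemma sfB: "sigma_finite_measure BM" using lr unfolding low_rank_mdp_def by auto
lemma layer_range: "x \<in> space BM \<Longrightarrow> layer M x \<in> {1..HH}" using lr unfolding low_rank_mdp_def by auto
lemma LS_sets[measurable]: "LS h \<in> sets BM" using lr unfolding low_rank_mdp_def by auto
lemma sets_IM: "sets IM = sets BM" using lr unfolding low_rank_mdp_def by auto
lemma probI: "prob_space IM" using lr unfolding low_rank_mdp_def by auto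
lemma IM_L1: "emeasure IM (LS 1) = 1" using lr unfolding low_rank_mdp_def by auto
lemma phi_meas: "h \<in> {1..<HH} \<Longrightarrow> a \<in> AA \<Longrightarrow>
   (\<lambda>x. indicator (LS h) x *\<^sub>R phi M h x a) \<in> borel_measurable BM"
  using lr unfolding low_rank_mdp_def by auto
lemma mu_meas: "h \<in> {2..HH} \<Longrightarrow> (\<lambda>x. indicator (LS h) x *\<^sub>R mu M h x) \<in> borel_measurable BM"
  using lr unfolding low_rank_mdp_def by auto
lemma trans_nonneg: "h \<in> {1..<HH} \<Longrightarrow> x \<in> LS h \<Longrightarrow> a \<in> AA \<Longrightarrow> x' \<in> LS (Suc h) \<Longrightarrow>
   0 \<le> mu M (Suc h) x' \<bullet> phi M h x a"
  using lr unfolding low_rank_mdp_def by auto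
lemma trans_one: "h \<in> {1..<HH} \<Longrightarrow> x \<in> LS h \<Longrightarrow> a \<in> AA \<Longrightarrow>
   (\<integral>\<^sup>+x'. ennreal (mu M (Suc h) x' \<bullet> phi M h x a) * indicator (LS (Suc h)) x' \<partial>BM) = 1"
  using lr unfolding low_rank_mdp_def by auto
lemma phi_norm: "h \<in> {1..<HH} \<Longrightarrow> x \<in> LS h \<Longrightarrow> a \<in> AA \<Longrightarrow> norm (phi M h x a) \<le> 1"
  using lr unfolding low_rank_mdp_def by auto
lemma mu_int: "h \<in> {2..HH} \<Longrightarrow> g \<in> borel_measurable BM \<Longrightarrow> (\<forall>x\<in>LS h. 0 \<le> g x \<and> g x \<le> 1) \<Longrightarrow>
        integrable BM (\<lambda>x. (indicator (LS h) x * g x) *\<^sub>R mu M h x) \<and>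
        norm (\<integral>x. (indicator (LS h) x * g x) *\<^sub>R mu M h x \<partial>BM) \<le> sqrt (real CARD('d))"
  using lr unfolding low_rank_mdp_def by auto

definition "Mk k = (if k = 1 then IM else BM)"
definition "W \<sigma> k y = (if k = 1 then 1 else occ M \<sigma> k y)"
definition "T \<sigma> k y x = (\<Sum>a\<in>AA. ennreal (\<sigma> y (Some a)) * ennreal (mu M (Suc k) x \<bullet> phi M k y a))"

lemma sets_Mk: "sets (Mk k) = sets BM" by (simp add: Mk_def sets_IM)
lemma space_Mk: "space (Mk k) = space BM" using sets_Mk sets_eq_imp_space_eq by blast
lemma sf_Mk: "sigma_finite_measure (Mk k)"
  by (simp add: Mk_def sfB probI prob_space_imp_sigma_finite)

lemma occ_step: assumes "1 \<le> k" shows "occ M \<sigma> (Suc k) x = (\<integral>\<^sup>+y. W \<sigma> k y * T \<sigma> k y x * indicator (LS k) y \<partial>Mk k)"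
proof (cases k)
  case 0 then show ?thesis using assms by simp
next
  case (Suc j)
  then show ?thesis
  proof (cases j)
    case 0 then show ?thesis using Suc by (simp add: W_def T_def Mk_def numeral_2_eq_2)
  next
    case (Suc i) then show ?thesis using \<open>k = Suc j\<close> by (simp add: W_def T_def Mk_def)
  qed
qed

definition "subpol \<sigma> \<longleftrightarrow> (\<forall>a\<in>AA. (\<lambda>y. \<sigma> y (Some a)) \<in> borel_measurable BM) \<and>
   (\<forall>y\<in>space BM. \<forall>a\<in>AA. 0 \<le> \<sigma> y (Some a))"

definition "K k a x y = ennreal (mu M (Suc k) x \<bullet> phi M k y a) * indicator (LS (Suc k)) x * indicator (LS k) y"

definition "G \<sigma> k x y = W \<sigma> k y * indicator (LS k) y * (\<Sum>a\<in>AA. ennreal (\<sigma> y (Some a)) * K k a x y)"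

lemma meas_Mk: "f \<in> borel_measurable BM \<Longrightarrow> f \<in> borel_measurable (Mk k)"
  using measurable_cong_sets[OF sets_Mk[of k] refl] by blast

lemma K_meas: assumes "k \<in> {1..<HH}" "a \<in> AA"
  shows "(\<lambda>(x,y). K k a x y) \<in> borel_measurable (BM \<Otimes>\<^sub>M Mk k)"
proof -
  have f: "(\<lambda>x. indicator (LS (Suc k)) x *\<^sub>R mu M (Suc k) x) \<in> borel_measurable BM"
    using mu_meas[of "Suc k"] assms by auto
  have g: "(\<lambda>y. indicator (LS k) y *\<^sub>R phi M k y a) \<in> borel_measurable (Mk k)"
    using phi_meas[of k a] assms by (auto intro: meas_Mk)
  have f2: "(\<lambda>p. indicator (LS (Suc k)) (fst p) *\<^sub>R mu M (Suc k) (fst p)) \<in> borel_measurable (BM \<Otimes>\<^sub>M Mk k)"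
    using measurable_compose[OF measurable_fst[of BM "Mk k"] f] by (simp add: comp_def)
  have g2: "(\<lambda>p. indicator (LS k) (snd p) *\<^sub>R phi M k (snd p) a) \<in> borel_measurable (BM \<Otimes>\<^sub>M Mk k)"
    using measurable_compose[OF measurable_snd[of BM "Mk k"] g] by (simp add: comp_def)
  have "(\<lambda>p. ennreal ((indicator (LS (Suc k)) (fst p) *\<^sub>R mu M (Suc k) (fst p)) \<bullet> (indicator (LS k) (snd p) *\<^sub>R phi M k (snd p) a))) \<in> borel_measurable (BM \<Otimes>\<^sub>M Mk k)"
    using f2 g2 by measurable
  moreover have "(\<lambda>(x,y). K k a x y) = (\<lambda>p. ennreal ((indicator (LS (Suc k)) (fst p) *\<^sub>R mu M (Suc k) (fst p)) \<bullet> (indicator (LS k) (snd p) *\<^sub>R phi M k (snd p) a)))"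
    by (auto simp: K_def indicator_def fun_eq_iff)
  ultimately show ?thesis by simp
qed

lemma G_meas: assumes "subpol \<sigma>" "k \<in> {1..<HH}" "(\<lambda>y. W \<sigma> k y * indicator (LS k) y) \<in> borel_measurable (Mk k)"
  shows "(\<lambda>(x,y). G \<sigma> k x y) \<in> borel_measurable (BM \<Otimes>\<^sub>M Mk k)"
proof -
  have w: "(\<lambda>p. W \<sigma> k (snd p) * indicator (LS k) (snd p)) \<in> borel_measurable (BM \<Otimes>\<^sub>M Mk k)"
    using measurable_compose[OF measurable_snd[of BM "Mk k"] assms(3)] by (simp add: comp_def)
  have s: "a \<in> AA \<Longrightarrow> (\<lambda>p. ennreal (\<sigma> (snd p) (Some a))) \<in> borel_measurable (BM \<Otimes>\<^sub>M Mk k)" for a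
  proof -
    assume a: "a \<in> AA"
    have "(\<lambda>y. \<sigma> y (Some a)) \<in> borel_measurable (Mk k)" using assms(1) a by (auto simp: subpol_def intro: meas_Mk)
    from measurable_compose[OF measurable_snd[of BM "Mk k"] this] show ?thesis by (simp add: comp_def)
  qed
  have k: "a \<in> AA \<Longrightarrow> (\<lambda>p. K k a (fst p) (snd p)) \<in> borel_measurable (BM \<Otimes>\<^sub>M Mk k)" for a
    using K_meas[OF assms(2)] by (simp add: case_prod_beta')
  have "(\<lambda>p. W \<sigma> k (snd p) * indicator (LS k) (snd p) * (\<Sum>a\<in>AA. ennreal (\<sigma> (snd p) (Some a)) * K k a (fst p) (snd p))) \<in> borel_measurable (BM \<Otimes>\<^sub>M Mk k)"
    using w s k by measurable
  then show ?thesis by (simp add: G_def case_prod_beta')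
qed

lemma occ_ind: assumes "1 \<le> k"
  shows "occ M \<sigma> (Suc k) x * indicator (LS (Suc k)) x = (\<integral>\<^sup>+y. G \<sigma> k x y \<partial>Mk k)"
proof (cases "x \<in> LS (Suc k)")
  case True
  have "occ M \<sigma> (Suc k) x * indicator (LS (Suc k)) x = occ M \<sigma> (Suc k) x" using True by simp
  also have "\<dots> = (\<integral>\<^sup>+y. G \<sigma> k x y \<partial>Mk k)" unfolding occ_step[OF assms]
    by (rule nn_integral_cong) (auto simp: True G_def T_def K_def indicator_def sum_distrib_left mult_ac)
  finally show ?thesis .
next
  case False
  have "G \<sigma> k x = (\<lambda>y. 0)" by (auto simp: G_def K_def False fun_eq_iff)
  then show ?thesis by (simp add: False)
qed

lemma W_meas: assumes "subpol \<sigma>" "k \<in> {1..HH}"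
  shows "(\<lambda>y. W \<sigma> k y * indicator (LS k) y) \<in> borel_measurable (Mk k)"
  using assms(2)
proof (induction k)
  case 0 then show ?case by simp
next
  case (Suc j)
  show ?case
  proof (cases "j = 0")
    case True
    then show ?thesis by (auto simp: W_def intro!: meas_Mk)
  next
    case False
    then have j: "j \<in> {1..<HH}" "1 \<le> j" using Suc.prems by auto
    have IH: "(\<lambda>y. W \<sigma> j y * indicator (LS j) y) \<in> borel_measurable (Mk j)" using Suc.IH j by auto
    have "(\<lambda>x. \<integral>\<^sup>+y. G \<sigma> j x y \<partial>Mk j) \<in> borel_measurable BM"
      by (rule sigma_finite_measure.borel_measurable_nn_integral[OF sf_Mk]) (rule G_meas[OF assms(1) j(1) IH])
    moreover have "(\<lambda>y. W \<sigma> (Suc j) y * indicator (LS (Suc j)) y) = (\<lambda>x. \<integral>\<^sup>+y. G \<sigma> j x y \<partial>Mk j)"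
      using occ_ind[OF j(2)] False by (auto simp: W_def fun_eq_iff)
    ultimately show ?thesis using False by (simp add: Mk_def)
  qed
qed

lemma occ_meas: assumes "subpol \<sigma>" "k \<in> {2..HH}"
  shows "(\<lambda>y. occ M \<sigma> k y * indicator (LS k) y) \<in> borel_measurable BM"
  using W_meas[OF assms(1), of k] assms(2) by (simp add: W_def Mk_def)

lemma K_int: assumes "k \<in> {1..<HH}" "a \<in> AA" "y \<in> space BM"
  shows "(\<integral>\<^sup>+x. K k a x y \<partial>BM) = indicator (LS k) y"
proof (cases "y \<in> LS k")
  case True
  then show ?thesis using trans_one[OF assms(1) True assms(2)] by (simp add: K_def)
next
  case False then show ?thesis by (simp add: K_def)
qed

lemma K_meas1: assumes "k \<in> {1..<HH}" "a \<in> AA"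
  shows "(\<lambda>x. K k a x y) \<in> borel_measurable BM"
proof -
  have f: "(\<lambda>x. indicator (LS (Suc k)) x *\<^sub>R mu M (Suc k) x) \<in> borel_measurable BM"
    using mu_meas[of "Suc k"] assms by auto
  have "(\<lambda>x. ennreal ((indicator (LS (Suc k)) x *\<^sub>R mu M (Suc k) x) \<bullet> (indicator (LS k) y *\<^sub>R phi M k y a))) \<in> borel_measurable BM"
    using f by measurable
  moreover have "(\<lambda>x. K k a x y) = (\<lambda>x. ennreal ((indicator (LS (Suc k)) x *\<^sub>R mu M (Suc k) x) \<bullet> (indicator (LS k) y *\<^sub>R phi M k y a)))"
    by (auto simp: K_def indicator_def fun_eq_iff)
  ultimately show ?thesis by simp
qed

lemma mass: assumes "subpol \<sigma>" "k \<in> {1..<HH}"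
  shows "(\<integral>\<^sup>+x. occ M \<sigma> (Suc k) x * indicator (LS (Suc k)) x \<partial>BM)
     = (\<integral>\<^sup>+y. W \<sigma> k y * (\<Sum>a\<in>AA. ennreal (\<sigma> y (Some a))) * indicator (LS k) y \<partial>Mk k)"
proof -
  interpret p: pair_sigma_finite BM "Mk k" by (intro pair_sigma_finite.intro sfB sf_Mk)
  have k1: "1 \<le> k" using assms by auto
  have Wm: "(\<lambda>y. W \<sigma> k y * indicator (LS k) y) \<in> borel_measurable (Mk k)" using W_meas[OF assms(1)] assms by auto
  have "(\<integral>\<^sup>+x. occ M \<sigma> (Suc k) x * indicator (LS (Suc k)) x \<partial>BM) = (\<integral>\<^sup>+x. \<integral>\<^sup>+y. G \<sigma> k x y \<partial>Mk k \<partial>BM)"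
    using occ_ind[OF k1] by simp
  also have "\<dots> = (\<integral>\<^sup>+y. \<integral>\<^sup>+x. G \<sigma> k x y \<partial>BM \<partial>Mk k)"
    by (rule p.Fubini'[symmetric]) (rule G_meas[OF assms(1) assms(2) Wm])
  also have "\<dots> = (\<integral>\<^sup>+y. W \<sigma> k y * (\<Sum>a\<in>AA. ennreal (\<sigma> y (Some a))) * indicator (LS k) y \<partial>Mk k)"
  proof (rule nn_integral_cong)
    fix y assume y: "y \<in> space (Mk k)"
    then have yB: "y \<in> space BM" by (simp add: space_Mk)
    have "(\<integral>\<^sup>+x. G \<sigma> k x y \<partial>BM) = W \<sigma> k y * indicator (LS k) y * (\<Sum>a\<in>AA. ennreal (\<sigma> y (Some a)) * (\<integral>\<^sup>+x. K k a x y \<partial>BM))"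
    proof -
      have m: "a \<in> AA \<Longrightarrow> (\<lambda>x. ennreal (\<sigma> y (Some a)) * K k a x y) \<in> borel_measurable BM" for a
        using K_meas1[OF assms(2)] by measurable
      have "(\<integral>\<^sup>+x. G \<sigma> k x y \<partial>BM) = W \<sigma> k y * indicator (LS k) y * (\<integral>\<^sup>+x. (\<Sum>a\<in>AA. ennreal (\<sigma> y (Some a)) * K k a x y) \<partial>BM)"
        unfolding G_def by (rule nn_integral_cmult) (use m in measurable)
      also have "(\<integral>\<^sup>+x. (\<Sum>a\<in>AA. ennreal (\<sigma> y (Some a)) * K k a x y) \<partial>BM) = (\<Sum>a\<in>AA. \<integral>\<^sup>+x. ennreal (\<sigma> y (Some a)) * K k a x y \<partial>BM)"
        by (rule nn_integral_sum) (rule m)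
      also have "\<dots> = (\<Sum>a\<in>AA. ennreal (\<sigma> y (Some a)) * (\<integral>\<^sup>+x. K k a x y \<partial>BM))"
        by (rule sum.cong) (auto intro!: nn_integral_cmult K_meas1[OF assms(2)])
      finally show ?thesis .
    qed
    also have "\<dots> = W \<sigma> k y * (\<Sum>a\<in>AA. ennreal (\<sigma> y (Some a))) * indicator (LS k) y"
      using K_int[OF assms(2) _ yB] by (auto simp: indicator_def)
    finally show "(\<integral>\<^sup>+x. G \<sigma> k x y \<partial>BM) = W \<sigma> k y * (\<Sum>a\<in>AA. ennreal (\<sigma> y (Some a))) * indicator (LS k) y" .
  qed
  finally show ?thesis .
qed

lemma occ_mono:
  assumes "\<forall>y\<in>space BM. layer M y < k \<longrightarrow> (\<forall>a\<in>AA. \<sigma>1 y (Some a) \<le> \<sigma>2 y (Some a))"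
  shows "occ M \<sigma>1 k x \<le> occ M \<sigma>2 k x"
  using assms
proof (induction k arbitrary: x)
  case 0 then show ?case by simp
next
  case (Suc j)
  show ?case
  proof (cases "j = 0")
    case True then show ?thesis by simp
  next
    case False
    then have j1: "1 \<le> j" by simp
    have W: "y \<in> LS j \<Longrightarrow> W \<sigma>1 j y \<le> W \<sigma>2 j y" for y
      using Suc.IH[of y] Suc.prems by (auto simp: W_def)
    have Tm: "y \<in> LS j \<Longrightarrow> T \<sigma>1 j y x \<le> T \<sigma>2 j y x" for y
      unfolding T_def using Suc.prems
      by (intro sum_mono mult_right_mono ennreal_leI) (auto simp: layer_set_def)
    show ?thesis unfolding occ_step[OF j1]
      by (intro nn_integral_mono) (auto simp: indicator_def intro!: mult_mono W Tm)
  qed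
qed

lemma occ_cong:
  assumes "\<forall>y\<in>space BM. layer M y < k \<longrightarrow> (\<forall>a\<in>AA. \<sigma>1 y (Some a) = \<sigma>2 y (Some a))"
  shows "occ M \<sigma>1 k x = occ M \<sigma>2 k x"
  using occ_mono[of k \<sigma>1 \<sigma>2 x] occ_mono[of k \<sigma>2 \<sigma>1 x] assms by (auto intro: antisym)

lemma T_bound: assumes "k \<in> {1..<HH}" "y \<in> LS k" "x \<in> LS (Suc k)"
  shows "T \<sigma> k y x \<le> ennreal (norm (mu M (Suc k) x)) * (\<Sum>a\<in>AA. ennreal (\<sigma> y (Some a)))"
proof -
  have "T \<sigma> k y x \<le> (\<Sum>a\<in>AA. ennreal (\<sigma> y (Some a)) * ennreal (norm (mu M (Suc k) x)))"
    unfolding T_def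
  proof (intro sum_mono mult_left_mono ennreal_leI)
    fix a assume a: "a \<in> AA"
    have "mu M (Suc k) x \<bullet> phi M k y a \<le> norm (mu M (Suc k) x) * norm (phi M k y a)"
      by (rule norm_cauchy_schwarz)
    also have "\<dots> \<le> norm (mu M (Suc k) x) * 1"
      using phi_norm[OF assms(1,2) a] by (intro mult_left_mono) auto
    finally show "mu M (Suc k) x \<bullet> phi M k y a \<le> norm (mu M (Suc k) x)" by simp
  qed auto
  also have "\<dots> = ennreal (norm (mu M (Suc k) x)) * (\<Sum>a\<in>AA. ennreal (\<sigma> y (Some a)))"
    by (simp add: sum_distrib_left mult_ac)
  finally show ?thesis .
qed

primrec trS :: "real \<Rightarrow> ('x \<Rightarrow> 'a option \<Rightarrow> real) \<Rightarrow> nat \<Rightarrow> ('x \<Rightarrow> 'a option \<Rightarrow> real)" where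
  "trS \<eta> e 0 = e"
| "trS \<eta> e (Suc n) = (\<lambda>y. if layer M y = Suc n \<and> 2 \<le> Suc n \<and>
      \<not> (ennreal (\<eta> * norm (mu M (Suc n) y)) \<le> occ M (trS \<eta> e n) (Suc n) y) then term_action else trS \<eta> e n y)"

lemma trS_high: "n < layer M y \<Longrightarrow> trS \<eta> e n y = e y"
  by (induction n) auto

lemma trS_low: "n \<le> m \<Longrightarrow> layer M y \<le> n \<Longrightarrow> trS \<eta> e m y = trS \<eta> e n y"
  by (induction m) (auto simp: le_Suc_eq)

lemma trS_one: "layer M y \<le> 1 \<Longrightarrow> trS \<eta> e m y = e y"
proof -
  assume l: "layer M y \<le> 1"
  show ?thesis
  proof (cases m)
    case 0 then show ?thesis by simp
  next
    case (Suc j)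
    have "trS \<eta> e m y = trS \<eta> e 1 y" using trS_low[of 1 m y] l Suc by auto
    then show ?thesis by simp
  qed
qed

lemma trS_occ: assumes "l = layer M y" "2 \<le> l" "l \<le> m"
  shows "occ M (trS \<eta> e m) l = occ M (trS \<eta> e (l - 1)) l"
proof (rule ext, rule occ_cong, intro ballI impI)
  fix z a assume z: "z \<in> space BM" "layer M z < l" "a \<in> AA"
  have "trS \<eta> e m z = trS \<eta> e (l - 1) z" by (rule trS_low) (use assms z in auto)
  then show "trS \<eta> e m z (Some a) = trS \<eta> e (l - 1) z (Some a)" by simp
qed

lemma trS_char: assumes "2 \<le> layer M y" "layer M y \<le> m"
  shows "trS \<eta> e m y = (if ennreal (\<eta> * norm (mu M (layer M y) y)) \<le> occ M (trS \<eta> e m) (layer M y) y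
                        then e y else term_action)"
proof -
  obtain j where j: "layer M y = Suc j" using assms by (cases "layer M y") auto
  have "trS \<eta> e m y = trS \<eta> e (Suc j) y" using trS_low[of "Suc j" m y] assms j by auto
  moreover have "trS \<eta> e j y = e y" using trS_high[of j y] j by simp
  moreover have "occ M (trS \<eta> e m) (Suc j) = occ M (trS \<eta> e j) (Suc j)"
    using trS_occ[of "Suc j" y m] assms j by simp
  ultimately show ?thesis using assms j by auto
qed

lemma trS_class: assumes "ext_policy M e"
  shows "\<exists>p \<in> trunc_class M \<eta> n. (\<forall>y\<in>space BM. \<forall>a\<in>AA. trS \<eta> e n y (Some a) \<le> p y (Some a) \<and> 0 \<le> p y (Some a))
          \<and> (\<forall>y\<in>space BM. n < layer M y \<longrightarrow> p y = e y)"
proof (induction n)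
  case 0
  have "\<forall>y\<in>space BM. \<forall>a\<in>AA. 0 \<le> e y (Some a)" using assms by (auto simp: ext_policy_def)
  then show ?case using assms by auto
next
  case (Suc n)
  then obtain p where p: "p \<in> trunc_class M \<eta> n"
    and dom: "\<forall>y\<in>space BM. \<forall>a\<in>AA. trS \<eta> e n y (Some a) \<le> p y (Some a) \<and> 0 \<le> p y (Some a)"
    and hi: "\<forall>y\<in>space BM. n < layer M y \<longrightarrow> p y = e y" by blast
  define R where "R = reach M (trunc_class M \<eta> n) (Suc n) \<eta>"
  define p' where "p' = (\<lambda>y. if y \<in> LS (Suc n) then (if y \<in> R then p y else term_action) else p y)"
  have mem: "p' \<in> trunc_class M \<eta> (Suc n)"
    unfolding trunc_class.simps mem_Collect_eq
    by (rule bexI[OF _ p]) (auto simp: p'_def R_def layer_set_def)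
  have nn: "\<forall>y\<in>space BM. \<forall>a\<in>AA. 0 \<le> p' y (Some a)"
    using dom by (auto simp: p'_def term_action_def)
  have dom': "trS \<eta> e (Suc n) y (Some a) \<le> p' y (Some a)" if y: "y \<in> space BM" and a: "a \<in> AA" for y a
  proof (cases "y \<in> LS (Suc n)")
    case False
    then have "layer M y \<noteq> Suc n" using y by (auto simp: layer_set_def)
    then show ?thesis using False dom y a by (auto simp: p'_def)
  next
    case True
    then have ly: "layer M y = Suc n" by (auto simp: layer_set_def)
    show ?thesis
    proof (cases "n = 0")
      case True
      then have "y \<in> R" using \<open>y \<in> LS (Suc n)\<close> by (simp add: R_def reach_def)
      then show ?thesis using True dom y a \<open>y \<in> LS (Suc n)\<close> by (auto simp: p'_def)
    next
      case False
      show ?thesis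
      proof (cases "ennreal (\<eta> * norm (mu M (Suc n) y)) \<le> occ M (trS \<eta> e n) (Suc n) y")
        case False
        then have "trS \<eta> e (Suc n) y = term_action" using ly \<open>n \<noteq> 0\<close> by auto
        then show ?thesis using nn y a by (auto simp: term_action_def)
      next
        case le: True
        have "occ M (trS \<eta> e n) (Suc n) y \<le> occ M p (Suc n) y"
          by (rule occ_mono) (use dom in auto)
        then have "y \<in> R" using le \<open>y \<in> LS (Suc n)\<close> \<open>n \<noteq> 0\<close> p
          unfolding R_def reach_def by (auto intro: order_trans)
        then show ?thesis using le ly dom y a \<open>y \<in> LS (Suc n)\<close> by (auto simp: p'_def)
      qed
    qed
  qed
  have hi': "\<forall>y\<in>space BM. Suc n < layer M y \<longrightarrow> p' y = e y"
    using hi by (auto simp: p'_def layer_set_def)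
  show ?case using mem nn dom' hi' by blast
qed

lemma trS_subpol: assumes "subpol e" shows "n \<le> HH \<Longrightarrow> subpol (trS \<eta> e n)"
proof (induction n)
  case 0 then show ?case using assms by simp
next
  case (Suc n)
  then have IH: "subpol (trS \<eta> e n)" by simp
  show ?case
  proof (cases "n = 0")
    case True
    have "trS \<eta> e (Suc n) = trS \<eta> e n" using True by (auto simp: fun_eq_iff)
    then show ?thesis using IH by simp
  next
    case False
    then have sn: "Suc n \<in> {2..HH}" using Suc.prems by auto
    have om: "(\<lambda>y. occ M (trS \<eta> e n) (Suc n) y * indicator (LS (Suc n)) y) \<in> borel_measurable BM"
      by (rule occ_meas[OF IH sn])
    have mm: "(\<lambda>y. indicator (LS (Suc n)) y *\<^sub>R mu M (Suc n) y) \<in> borel_measurable BM"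
      by (rule mu_meas[OF sn])
    have meas: "(\<lambda>y. trS \<eta> e (Suc n) y (Some a)) \<in> borel_measurable BM" if a: "a \<in> AA" for a
    proof -
      have tm: "(\<lambda>y. trS \<eta> e n y (Some a)) \<in> borel_measurable BM" using IH a by (auto simp: subpol_def)
      have "(\<lambda>y. if y \<in> LS (Suc n) \<and> occ M (trS \<eta> e n) (Suc n) y * indicator (LS (Suc n)) y
              < ennreal (\<eta> * norm (indicator (LS (Suc n)) y *\<^sub>R mu M (Suc n) y)) then 0 else trS \<eta> e n y (Some a))
            \<in> borel_measurable BM"
        using om mm tm by measurable
      moreover have "y \<in> space BM \<Longrightarrow> trS \<eta> e (Suc n) y (Some a) =
          (if y \<in> LS (Suc n) \<and> occ M (trS \<eta> e n) (Suc n) y * indicator (LS (Suc n)) y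
              < ennreal (\<eta> * norm (indicator (LS (Suc n)) y *\<^sub>R mu M (Suc n) y)) then 0 else trS \<eta> e n y (Some a))" for y
        using False by (auto simp: layer_set_def term_action_def not_le)
      ultimately show ?thesis using measurable_cong by (smt (verit))
    qed
    have "\<forall>y\<in>space BM. \<forall>a\<in>AA. 0 \<le> trS \<eta> e (Suc n) y (Some a)"
      using IH by (auto simp: subpol_def term_action_def)
    then show ?thesis using meas by (simp add: subpol_def)
  qed
qed

lemma mu_piece: assumes k: "k \<in> {2..HH}" and g: "g \<in> borel_measurable BM" "\<forall>x\<in>LS k. 0 \<le> g x \<and> g x \<le> 1"
  and c: "norm c \<le> 1" and nn: "\<forall>y\<in>space BM. 0 \<le> ((indicator (LS k) y * g y) *\<^sub>R mu M k y) \<bullet> c"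
  shows "(\<integral>\<^sup>+y. ennreal (((indicator (LS k) y * g y) *\<^sub>R mu M k y) \<bullet> c) \<partial>BM) \<le> ennreal (sqrt (real CARD('d)))"
proof -
  let ?F = "\<lambda>y. (indicator (LS k) y * g y) *\<^sub>R mu M k y"
  have int: "integrable BM ?F" and nb: "norm (\<integral>x. ?F x \<partial>BM) \<le> sqrt (real CARD('d))"
    using mu_int[OF k g] by auto
  have eq: "(\<integral>\<^sup>+y. ennreal (?F y \<bullet> c) \<partial>BM) = ennreal (\<integral>y. ?F y \<bullet> c \<partial>BM)"
  proof -
    have i2: "integrable BM (\<lambda>y. ?F y \<bullet> c)" by (intro integrable_inner_left) (rule int)
    show ?thesis by (rule nn_integral_eq_integral[OF i2]) (use nn in auto)
  qed
  have "(\<integral>y. ?F y \<bullet> c \<partial>BM) = (\<integral>y. ?F y \<partial>BM) \<bullet> c"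
    by (intro integral_inner_left) (rule int)
  also have "\<dots> \<le> norm (\<integral>y. ?F y \<partial>BM) * norm c" by (rule norm_cauchy_schwarz)
  also have "\<dots> \<le> sqrt (real CARD('d)) * 1"
    using nb c by (intro mult_mono) auto
  finally have "(\<integral>y. ?F y \<bullet> c \<partial>BM) \<le> sqrt (real CARD('d))" by simp
  then show ?thesis unfolding eq by (rule ennreal_leI)
qed

lemma mu_L1: assumes k: "k \<in> {2..HH}"
  shows "(\<integral>\<^sup>+y. ennreal (norm (mu M k y)) * indicator (LS k) y \<partial>BM) \<le> ennreal (2 * sqrt (real CARD('d)) * real CARD('d))"
proof -
  let ?v = "\<lambda>y. indicator (LS k) y *\<^sub>R mu M k y"
  have vm: "?v \<in> borel_measurable BM" by (rule mu_meas[OF k])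
  have comp: "(\<integral>\<^sup>+y. ennreal \<bar>?v y $ i\<bar> \<partial>BM) \<le> ennreal (2 * sqrt (real CARD('d)))" for i
  proof -
    define g1 where "g1 = (\<lambda>y. if 0 \<le> ?v y $ i then 1 else (0::real))"
    define g2 where "g2 = (\<lambda>y. if ?v y $ i < 0 then 1 else (0::real))"
    have vi0: "(\<lambda>y. ?v y \<bullet> axis i 1) \<in> borel_measurable BM" using vm by measurable
    have vi: "(\<lambda>y. ?v y $ i) \<in> borel_measurable BM" unfolding cart_eq_inner_axis by (rule vi0)
    have g1m: "g1 \<in> borel_measurable BM" unfolding g1_def using vi by measurable
    have g2m: "g2 \<in> borel_measurable BM" unfolding g2_def using vi by measurable
    have e1: "((indicator (LS k) y * g1 y) *\<^sub>R mu M k y) \<bullet> axis i 1 = max (?v y $ i) 0" for y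
      by (auto simp: g1_def inner_axis indicator_def)
    have e2: "((indicator (LS k) y * g2 y) *\<^sub>R mu M k y) \<bullet> axis i (-1) = max (- (?v y $ i)) 0" for y
      by (auto simp: g2_def inner_axis indicator_def)
    have p1: "(\<integral>\<^sup>+y. ennreal (max (?v y $ i) 0) \<partial>BM) \<le> ennreal (sqrt (real CARD('d)))"
    proof -
      have "(\<integral>\<^sup>+y. ennreal (max (?v y $ i) 0) \<partial>BM) = (\<integral>\<^sup>+y. ennreal (((indicator (LS k) y * g1 y) *\<^sub>R mu M k y) \<bullet> axis i 1) \<partial>BM)"
        by (simp only: e1)
      also have "\<dots> \<le> ennreal (sqrt (real CARD('d)))"
      proof (rule mu_piece[OF k g1m])
        show "\<forall>x\<in>LS k. 0 \<le> g1 x \<and> g1 x \<le> 1" by (simp add: g1_def)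
        show "norm (axis i (1::real)) \<le> 1" using norm_axis_1[of i] by simp
        show "\<forall>y\<in>space BM. 0 \<le> ((indicator (LS k) y * g1 y) *\<^sub>R mu M k y) \<bullet> axis i 1"
          by (simp only: e1) simp
      qed
      finally show ?thesis .
    qed
    have p2: "(\<integral>\<^sup>+y. ennreal (max (- (?v y $ i)) 0) \<partial>BM) \<le> ennreal (sqrt (real CARD('d)))"
    proof -
      have "(\<integral>\<^sup>+y. ennreal (max (- (?v y $ i)) 0) \<partial>BM) = (\<integral>\<^sup>+y. ennreal (((indicator (LS k) y * g2 y) *\<^sub>R mu M k y) \<bullet> axis i (-1)) \<partial>BM)"
        by (simp only: e2)
      also have "\<dots> \<le> ennreal (sqrt (real CARD('d)))"
      proof (rule mu_piece[OF k g2m])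
        show "\<forall>x\<in>LS k. 0 \<le> g2 x \<and> g2 x \<le> 1" by (simp add: g2_def)
        show "norm (axis i (-1::real)) \<le> 1"
        proof -
          have "axis i (-1::real) = - axis i 1" by (simp add: axis_def vec_eq_iff)
          then show ?thesis using norm_axis_1[of i] by simp
        qed
        show "\<forall>y\<in>space BM. 0 \<le> ((indicator (LS k) y * g2 y) *\<^sub>R mu M k y) \<bullet> axis i (-1)"
          by (simp only: e2) simp
      qed
      finally show ?thesis .
    qed
    have "(\<integral>\<^sup>+y. ennreal \<bar>?v y $ i\<bar> \<partial>BM) = (\<integral>\<^sup>+y. ennreal (max (?v y $ i) 0) + ennreal (max (- (?v y $ i)) 0) \<partial>BM)"
    proof (rule nn_integral_cong)
      fix y
      show "ennreal \<bar>?v y $ i\<bar> = ennreal (max (?v y $ i) 0) + ennreal (max (- (?v y $ i)) 0)"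
        by (cases "0 \<le> ?v y $ i") (simp_all add: max_def)
    qed
    also have "\<dots> = (\<integral>\<^sup>+y. ennreal (max (?v y $ i) 0) \<partial>BM) + (\<integral>\<^sup>+y. ennreal (max (- (?v y $ i)) 0) \<partial>BM)"
      by (rule nn_integral_add) (use vi in measurable, use vi in measurable)
    also have "\<dots> \<le> ennreal (sqrt (real CARD('d))) + ennreal (sqrt (real CARD('d)))"
      by (intro add_mono p1 p2)
    also have "\<dots> = ennreal (sqrt (real CARD('d)) + sqrt (real CARD('d)))"
      by (rule ennreal_plus[symmetric]) auto
    also have "sqrt (real CARD('d)) + sqrt (real CARD('d)) = 2 * sqrt (real CARD('d))" by simp
    finally show ?thesis .
  qed
  have vi: "(\<lambda>y. ?v y $ i) \<in> borel_measurable BM" for i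
  proof -
    have vi0: "(\<lambda>y. ?v y \<bullet> axis i 1) \<in> borel_measurable BM" using vm by measurable
    show ?thesis unfolding cart_eq_inner_axis by (rule vi0)
  qed
  have "(\<integral>\<^sup>+y. ennreal (norm (mu M k y)) * indicator (LS k) y \<partial>BM) \<le> (\<integral>\<^sup>+y. (\<Sum>i\<in>UNIV. ennreal \<bar>?v y $ i\<bar>) \<partial>BM)"
  proof (rule nn_integral_mono)
    fix y
    have "ennreal (norm (mu M k y)) * indicator (LS k) y = ennreal (norm (?v y))"
      by (cases "y \<in> LS k") auto
    also have "\<dots> \<le> ennreal (\<Sum>i\<in>UNIV. \<bar>?v y $ i\<bar>)" by (intro ennreal_leI norm_le_l1_cart)
    also have "\<dots> = (\<Sum>i\<in>UNIV. ennreal \<bar>?v y $ i\<bar>)" by (rule sum_ennreal[symmetric]) simp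
    finally show "ennreal (norm (mu M k y)) * indicator (LS k) y \<le> (\<Sum>i\<in>UNIV. ennreal \<bar>?v y $ i\<bar>)" .
  qed
  also have "\<dots> = (\<Sum>i\<in>UNIV. \<integral>\<^sup>+y. ennreal \<bar>?v y $ i\<bar> \<partial>BM)"
    by (rule nn_integral_sum) (use vi in measurable)
  also have "\<dots> \<le> (\<Sum>i\<in>(UNIV::'d set). ennreal (2 * sqrt (real CARD('d))))"
    by (intro sum_mono comp)
  also have "\<dots> = of_nat CARD('d) * ennreal (2 * sqrt (real CARD('d)))"
    by (rule sum_constant)
  also have "\<dots> = ennreal (2 * sqrt (real CARD('d)) * real CARD('d))"
    by (simp add: ennreal_mult ennreal_of_nat_eq_real_of_nat mult.commute)
  finally show ?thesis .
qed

end

context lrm begin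

lemma trS_cases: "trS \<eta> e n y = e y \<or> trS \<eta> e n y = term_action"
  by (induction n) auto

lemma embed_ext: assumes "markov_policy M \<pi>" shows "ext_policy M (embed_policy \<pi>)"
proof -
  have s: "(\<Sum>b\<in>insert None (Some ` AA). embed_policy \<pi> x b) = (\<Sum>a\<in>AA. \<pi> x a)" for x
    using finA by (simp add: embed_policy_def sum.reindex)
  have m: "b \<in> insert None (Some ` AA) \<Longrightarrow> (\<lambda>x. embed_policy \<pi> x b) \<in> borel_measurable BM" for b
    using assms by (auto simp: embed_policy_def markov_policy_def)
  show ?thesis using assms m unfolding ext_policy_def s by (auto simp: markov_policy_def embed_policy_def)
qed

lemma embed_subpol: assumes "markov_policy M \<pi>" shows "subpol (embed_policy \<pi>)"
  using assms by (auto simp: subpol_def markov_policy_def embed_policy_def)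

lemma embed_sum: assumes "markov_policy M \<pi>" "y \<in> space BM"
  shows "(\<Sum>a\<in>AA. ennreal (embed_policy \<pi> y (Some a))) = 1"
proof -
  have "(\<Sum>a\<in>AA. ennreal (embed_policy \<pi> y (Some a))) = ennreal (\<Sum>a\<in>AA. \<pi> y a)"
    using assms by (subst sum_ennreal) (auto simp: embed_policy_def markov_policy_def)
  then show ?thesis using assms by (simp add: markov_policy_def)
qed

context
  fixes \<pi> :: "'x \<Rightarrow> 'a \<Rightarrow> real" and \<eta> :: real
  assumes mp: "markov_policy M \<pi>" and eta: "0 \<le> \<eta>"
begin

abbreviation "ee \<equiv> embed_policy \<pi>"
abbreviation "sg \<equiv> trS \<eta> ee HH"

lemma sg_subpol: "subpol sg" by (rule trS_subpol[OF embed_subpol[OF mp]]) simp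

lemma sg_sum: assumes "y \<in> space BM"
  shows "(\<Sum>a\<in>AA. ennreal (sg y (Some a))) = (if sg y = term_action then 0 else 1)"
proof (cases "sg y = term_action")
  case True then show ?thesis by (simp add: term_action_def)
next
  case False
  then have "sg y = ee y" using trS_cases by metis
  then show ?thesis using False embed_sum[OF mp assms] by simp
qed

lemma sg_le: assumes "y \<in> space BM" "a \<in> AA" shows "sg y (Some a) \<le> ee y (Some a)"
  using trS_cases[of \<eta> ee HH y] mp assms by (auto simp: term_action_def embed_policy_def markov_policy_def)

lemma occ_sg_le: "occ M sg k y \<le> occ M ee k y"
  by (rule occ_mono) (auto intro: sg_le)

lemma mass_e: assumes "k \<in> {2..HH}" shows "(\<integral>\<^sup>+y. occ M ee k y * indicator (LS k) y \<partial>BM) = 1"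
proof -
  have "2 \<le> k" "k \<le> HH" using assms by auto
  then show ?thesis
  proof (induction k rule: nat_induct_at_least)
    case base
    have "(\<integral>\<^sup>+y. occ M ee 2 y * indicator (LS 2) y \<partial>BM)
        = (\<integral>\<^sup>+y. W ee 1 y * (\<Sum>a\<in>AA. ennreal (ee y (Some a))) * indicator (LS 1) y \<partial>Mk (1::nat))"
    proof -
      have m: "(1::nat) \<in> {1..<HH}" using base by simp
      note mass[OF embed_subpol[OF mp] m]
      then show ?thesis using [[show_types, show_sorts]] unfolding Suc_1 .
    qed
    also have "\<dots> = (\<integral>\<^sup>+y. indicator (LS 1) y \<partial>IM)"
      by (simp add: Mk_def W_def) (rule nn_integral_cong, simp add: embed_sum[OF mp] sets_eq_imp_space_eq[OF sets_IM])
    also have "\<dots> = 1" using IM_L1 sets_IM by simp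
    finally show ?case .
  next
    case (Suc k)
    have "(\<integral>\<^sup>+y. occ M ee (Suc k) y * indicator (LS (Suc k)) y \<partial>BM)
        = (\<integral>\<^sup>+y. W ee k y * (\<Sum>a\<in>AA. ennreal (ee y (Some a))) * indicator (LS k) y \<partial>Mk k)"
      using mass[OF embed_subpol[OF mp], of k] Suc by simp
    also have "\<dots> = (\<integral>\<^sup>+y. occ M ee k y * indicator (LS k) y \<partial>BM)"
    proof -
      have "Mk k = BM" "\<And>y. W ee k y = occ M ee k y" using Suc by (auto simp: Mk_def W_def)
      then show ?thesis by (simp only:) (rule nn_integral_cong, simp add: embed_sum[OF mp])
    qed
    also have "\<dots> = 1" using Suc by simp
    finally show ?case .
  qed
qed

definition "c0 = \<eta> * (2 * sqrt (real CARD('d)) * real CARD('d))"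

lemma c0_nn: "0 \<le> c0" using eta by (simp add: c0_def)

lemma ee_not_term: "ee y \<noteq> term_action"
proof
  assume h: "ee y = term_action"
  have "ee y None = 0" by (simp add: embed_policy_def)
  moreover from h have "ee y None = 1" by (simp add: term_action_def)
  ultimately show False by simp
qed

lemma mass_sig_step: assumes k: "2 \<le> k" "Suc k \<le> HH"
  shows "(\<integral>\<^sup>+y. occ M sg k y * indicator (LS k) y \<partial>BM)
     \<le> (\<integral>\<^sup>+y. occ M sg (Suc k) y * indicator (LS (Suc k)) y \<partial>BM) + ennreal c0"
proof -
  let ?v = "\<lambda>y. indicator (LS k) y *\<^sub>R mu M k y"
  have kk: "k \<in> {1..<HH}" "k \<in> {2..HH}" using k by auto
  have m1: "(\<integral>\<^sup>+y. occ M sg (Suc k) y * indicator (LS (Suc k)) y \<partial>BM)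
      = (\<integral>\<^sup>+y. occ M sg k y * (\<Sum>a\<in>AA. ennreal (sg y (Some a))) * indicator (LS k) y \<partial>BM)"
  proof -
    have "Mk k = BM" "\<And>y. W sg k y = occ M sg k y" using k by (auto simp: Mk_def W_def)
    with mass[OF sg_subpol kk(1)] show ?thesis by simp
  qed
  have pw: "occ M sg k y * indicator (LS k) y \<le> occ M sg k y * (\<Sum>a\<in>AA. ennreal (sg y (Some a))) * indicator (LS k) y
       + ennreal (\<eta> * norm (?v y))" if y: "y \<in> space BM" for y
  proof (cases "y \<in> LS k")
    case False then show ?thesis by simp
  next
    case True
    then have ly: "layer M y = k" by (simp add: layer_set_def)
    show ?thesis
    proof (cases "sg y = term_action")
      case False
      then show ?thesis using sg_sum[OF y] by simp
    next
      case tm: True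
      have "sg y = (if ennreal (\<eta> * norm (mu M (layer M y) y)) \<le> occ M sg (layer M y) y then ee y else term_action)"
        by (rule trS_char) (use ly k in auto)
      moreover have "sg y \<noteq> ee y" using tm ee_not_term[of y] by metis
      ultimately have "\<not> ennreal (\<eta> * norm (mu M k y)) \<le> occ M sg k y" using ly by (auto split: if_splits)
      then have "occ M sg k y \<le> ennreal (\<eta> * norm (?v y))" using True by simp
      then show ?thesis using True by (simp add: add_increasing)
    qed
  qed
  have meas1: "(\<lambda>y. occ M sg k y * (\<Sum>a\<in>AA. ennreal (sg y (Some a))) * indicator (LS k) y) \<in> borel_measurable BM"
  proof -
    have o: "(\<lambda>y. occ M sg k y * indicator (LS k) y) \<in> borel_measurable BM" by (rule occ_meas[OF sg_subpol kk(2)])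
    have s: "a \<in> AA \<Longrightarrow> (\<lambda>y. sg y (Some a)) \<in> borel_measurable BM" for a using sg_subpol by (auto simp: subpol_def)
    have "(\<lambda>y. (occ M sg k y * indicator (LS k) y) * (\<Sum>a\<in>AA. ennreal (sg y (Some a)))) \<in> borel_measurable BM"
      using o s by measurable
    then show ?thesis by (simp add: mult_ac)
  qed
  have vm: "?v \<in> borel_measurable BM" by (rule mu_meas[OF kk(2)])
  have "(\<integral>\<^sup>+y. occ M sg k y * indicator (LS k) y \<partial>BM)
      \<le> (\<integral>\<^sup>+y. occ M sg k y * (\<Sum>a\<in>AA. ennreal (sg y (Some a))) * indicator (LS k) y + ennreal (\<eta> * norm (?v y)) \<partial>BM)"
    by (rule nn_integral_mono) (rule pw)
  also have "\<dots> = (\<integral>\<^sup>+y. occ M sg k y * (\<Sum>a\<in>AA. ennreal (sg y (Some a))) * indicator (LS k) y \<partial>BM)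
      + (\<integral>\<^sup>+y. ennreal (\<eta> * norm (?v y)) \<partial>BM)"
    by (rule nn_integral_add) (use meas1 in simp, use vm in measurable)
  also have "(\<integral>\<^sup>+y. ennreal (\<eta> * norm (?v y)) \<partial>BM) = ennreal \<eta> * (\<integral>\<^sup>+y. ennreal (norm (mu M k y)) * indicator (LS k) y \<partial>BM)"
  proof -
    have "(\<integral>\<^sup>+y. ennreal (\<eta> * norm (?v y)) \<partial>BM) = (\<integral>\<^sup>+y. ennreal \<eta> * ennreal (norm (?v y)) \<partial>BM)"
      using eta by (intro nn_integral_cong) (simp add: ennreal_mult)
    also have "\<dots> = ennreal \<eta> * (\<integral>\<^sup>+y. ennreal (norm (?v y)) \<partial>BM)"
      by (rule nn_integral_cmult) (use vm in measurable)
    also have "(\<integral>\<^sup>+y. ennreal (norm (?v y)) \<partial>BM) = (\<integral>\<^sup>+y. ennreal (norm (mu M k y)) * indicator (LS k) y \<partial>BM)"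
      by (intro nn_integral_cong) (simp add: indicator_def)
    finally show ?thesis .
  qed
  also have "ennreal \<eta> * (\<integral>\<^sup>+y. ennreal (norm (mu M k y)) * indicator (LS k) y \<partial>BM) \<le> ennreal \<eta> * ennreal (2 * sqrt (real CARD('d)) * real CARD('d))"
    by (intro mult_left_mono mu_L1 kk(2)) simp
  also have "ennreal \<eta> * ennreal (2 * sqrt (real CARD('d)) * real CARD('d)) = ennreal c0"
    using eta by (simp add: c0_def ennreal_mult)
  finally show ?thesis using m1 by simp
qed

lemma mass_sig: assumes "k \<in> {2..HH}"
  shows "1 \<le> (\<integral>\<^sup>+y. occ M sg k y * indicator (LS k) y \<partial>BM) + ennreal (real (k - 2) * c0)"
proof -
  have "2 \<le> k" "k \<le> HH" using assms by auto
  then show ?thesis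
  proof (induction k rule: nat_induct_at_least)
    case base
    have m: "(1::nat) \<in> {1..<HH}" using base by simp
    have "(\<integral>\<^sup>+y. occ M sg 2 y * indicator (LS 2) y \<partial>BM)
        = (\<integral>\<^sup>+y. W sg 1 y * (\<Sum>a\<in>AA. ennreal (sg y (Some a))) * indicator (LS 1) y \<partial>Mk (1::nat))"
      using mass[OF sg_subpol m] unfolding Suc_1 .
    also have "\<dots> = (\<integral>\<^sup>+y. indicator (LS 1) y \<partial>IM)"
    proof -
      have "y \<in> LS 1 \<Longrightarrow> (\<Sum>a\<in>AA. ennreal (sg y (Some a))) = 1" for y
        using trS_one[of y \<eta> ee HH] embed_sum[OF mp, of y] by (auto simp: layer_set_def)
      then show ?thesis by (simp add: Mk_def W_def) (rule nn_integral_cong, simp add: indicator_def)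
    qed
    also have "\<dots> = 1" using IM_L1 sets_IM by simp
    finally show ?case by simp
  next
    case (Suc k)
    have "1 \<le> (\<integral>\<^sup>+y. occ M sg k y * indicator (LS k) y \<partial>BM) + ennreal (real (k - 2) * c0)"
      using Suc by simp
    also have "\<dots> \<le> (\<integral>\<^sup>+y. occ M sg (Suc k) y * indicator (LS (Suc k)) y \<partial>BM) + ennreal c0 + ennreal (real (k - 2) * c0)"
      by (intro add_right_mono mass_sig_step) (use Suc in auto)
    also have "\<dots> = (\<integral>\<^sup>+y. occ M sg (Suc k) y * indicator (LS (Suc k)) y \<partial>BM) + ennreal (real (Suc k - 2) * c0)"
    proof -
      have "ennreal c0 + ennreal (real (k - 2) * c0) = ennreal (c0 + real (k - 2) * c0)"
        using c0_nn by (simp add: ennreal_plus)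
      also have "c0 + real (k - 2) * c0 = real (Suc k - 2) * c0" using Suc(1) by (simp add: of_nat_diff algebra_simps)
      finally show ?thesis by (simp add: add.assoc)
    qed
    finally show ?case .
  qed
qed

lemma final_bound: assumes h: "h \<in> {2..HH}" and x: "x \<in> LS h"
  shows "occ M ee h x \<le> occ M sg h x + ennreal (norm (mu M h x)) * ennreal (real (h - 2) * c0)"
proof (cases "h = 2")
  case True
  have "occ M ee h x = occ M sg h x"
    by (rule occ_cong) (use True trS_one in auto)
  then show ?thesis by simp
next
  case False
  then obtain k where hk: "h = Suc k" and k: "2 \<le> k" "Suc k \<le> HH" using h by (cases h) auto
  have kk: "k \<in> {1..<HH}" "k \<in> {2..HH}" "1 \<le> k" using k by auto
  have xB: "x \<in> space BM" using x by (simp add: layer_set_def)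
  let ?S = "\<lambda>y. \<Sum>a\<in>AA. ennreal (sg y (Some a))"
  define D where "D y = occ M ee k y * indicator (LS k) y - occ M sg k y * ?S y * indicator (LS k) y" for y
  have S1: "y \<in> space BM \<Longrightarrow> ?S y \<le> 1" for y using sg_sum[of y] by auto
  have le: "y \<in> space BM \<Longrightarrow> occ M sg k y * ?S y * indicator (LS k) y \<le> occ M ee k y * indicator (LS k) y" for y
  proof -
    assume y: "y \<in> space BM"
    have "occ M sg k y * ?S y \<le> occ M sg k y * 1" by (intro mult_left_mono S1 y) simp
    also have "\<dots> \<le> occ M ee k y" using occ_sg_le by simp
    finally show ?thesis by (intro mult_right_mono) auto
  qed
  have dec: "y \<in> space BM \<Longrightarrow> occ M ee k y * indicator (LS k) y = occ M sg k y * ?S y * indicator (LS k) y + D y" for y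
    unfolding D_def by (rule ennreal_ineq_diff_add) (rule le)
  have meas_e: "(\<lambda>y. occ M ee k y * indicator (LS k) y) \<in> borel_measurable BM"
    by (rule occ_meas[OF embed_subpol[OF mp] kk(2)])
  have meas1: "(\<lambda>y. occ M sg k y * ?S y * indicator (LS k) y) \<in> borel_measurable BM"
  proof -
    have o: "(\<lambda>y. occ M sg k y * indicator (LS k) y) \<in> borel_measurable BM" by (rule occ_meas[OF sg_subpol kk(2)])
    have s: "a \<in> AA \<Longrightarrow> (\<lambda>y. sg y (Some a)) \<in> borel_measurable BM" for a using sg_subpol by (auto simp: subpol_def)
    have "(\<lambda>y. (occ M sg k y * indicator (LS k) y) * ?S y) \<in> borel_measurable BM"
      using o s by measurable
    then show ?thesis by (simp add: mult_ac)
  qed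
  have measD: "D \<in> borel_measurable BM"
    unfolding D_def[abs_def] using meas_e meas1 by measurable
  have m1: "(\<integral>\<^sup>+y. occ M sg (Suc k) y * indicator (LS (Suc k)) y \<partial>BM)
      = (\<integral>\<^sup>+y. occ M sg k y * ?S y * indicator (LS k) y \<partial>BM)"
  proof -
    have "Mk k = BM" "\<And>y. W sg k y = occ M sg k y" using k by (auto simp: Mk_def W_def)
    with mass[OF sg_subpol kk(1)] show ?thesis by simp
  qed
  have sumD: "(\<integral>\<^sup>+y. occ M sg (Suc k) y * indicator (LS (Suc k)) y \<partial>BM) + (\<integral>\<^sup>+y. D y \<partial>BM) = 1"
  proof -
    have "1 = (\<integral>\<^sup>+y. occ M ee k y * indicator (LS k) y \<partial>BM)" using mass_e[OF kk(2)] by simp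
    also have "\<dots> = (\<integral>\<^sup>+y. occ M sg k y * ?S y * indicator (LS k) y + D y \<partial>BM)"
      by (rule nn_integral_cong) (rule dec)
    also have "\<dots> = (\<integral>\<^sup>+y. occ M sg k y * ?S y * indicator (LS k) y \<partial>BM) + (\<integral>\<^sup>+y. D y \<partial>BM)"
      by (rule nn_integral_add[OF meas1 measD])
    finally show ?thesis using m1 by simp
  qed
  have Dle: "(\<integral>\<^sup>+y. D y \<partial>BM) \<le> ennreal (real (h - 2) * c0)"
  proof -
    let ?m = "(\<integral>\<^sup>+y. occ M sg (Suc k) y * indicator (LS (Suc k)) y \<partial>BM)"
    have "?m + (\<integral>\<^sup>+y. D y \<partial>BM) \<le> ?m + ennreal (real (Suc k - 2) * c0)"
      using sumD mass_sig[of "Suc k"] k by simp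
    moreover have "?m \<noteq> \<infinity>"
    proof
      assume "?m = \<infinity>"
      with sumD show False by simp
    qed
    ultimately show ?thesis using hk by (simp add: ennreal_add_left_cancel_le)
  qed
  have Gm: "(\<lambda>y. G sg k x y) \<in> borel_measurable BM"
  proof -
    have "(\<lambda>y. W sg k y * indicator (LS k) y) \<in> borel_measurable (Mk k)" by (rule W_meas[OF sg_subpol]) (use kk in auto)
    from G_meas[OF sg_subpol kk(1) this] have "(\<lambda>(x, y). G sg k x y) \<in> borel_measurable (BM \<Otimes>\<^sub>M Mk k)" .
    from measurable_compose[OF measurable_Pair1'[OF xB] this] have "(\<lambda>y. G sg k x y) \<in> borel_measurable (Mk k)" by simp
    then show ?thesis using k by (simp add: Mk_def)
  qed
  let ?c = "ennreal (norm (mu M (Suc k) x))"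
  have pw: "occ M ee k y * T ee k y x * indicator (LS k) y \<le> G sg k x y + D y * ?c" if y: "y \<in> space BM" for y
  proof (cases "y \<in> LS k")
    case False then show ?thesis by simp
  next
    case True
    have xk: "x \<in> LS (Suc k)" using x hk by simp
    have Gy: "G sg k x y = occ M sg k y * T sg k y x"
      using True xk k by (simp add: G_def K_def T_def W_def)
    have ST: "occ M sg k y * ?S y * T ee k y x = occ M sg k y * T sg k y x"
    proof (cases "sg y = term_action")
      case True then show ?thesis by (simp add: T_def term_action_def)
    next
      case False
      then have "sg y = ee y" using trS_cases by metis
      then show ?thesis using False sg_sum[OF y] by (simp add: T_def)
    qed
    have DT: "D y * T ee k y x \<le> D y * ?c"
    proof -
      have "T ee k y x \<le> ?c * (\<Sum>a\<in>AA. ennreal (ee y (Some a)))" by (rule T_bound[OF kk(1) True xk])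
      then show ?thesis using embed_sum[OF mp y] by (intro mult_left_mono) auto
    qed
    have "occ M ee k y * T ee k y x * indicator (LS k) y = (occ M ee k y * indicator (LS k) y) * T ee k y x"
      by (simp add: mult_ac)
    also have "\<dots> = (occ M sg k y * ?S y * indicator (LS k) y + D y) * T ee k y x" using dec[OF y] by simp
    also have "\<dots> = occ M sg k y * ?S y * T ee k y x + D y * T ee k y x"
      using True by (simp add: distrib_right)
    also have "\<dots> \<le> G sg k x y + D y * ?c" using ST Gy DT by (simp add: add_mono)
    finally show ?thesis .
  qed
  have "occ M ee h x = (\<integral>\<^sup>+y. occ M ee k y * T ee k y x * indicator (LS k) y \<partial>BM)"
  proof -
    have "Mk k = BM" "\<And>y. W ee k y = occ M ee k y" using k by (auto simp: Mk_def W_def)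
    with occ_step[OF kk(3), of ee x] hk show ?thesis by simp
  qed
  also have "\<dots> \<le> (\<integral>\<^sup>+y. G sg k x y + D y * ?c \<partial>BM)"
    by (rule nn_integral_mono) (rule pw)
  also have "\<dots> = (\<integral>\<^sup>+y. G sg k x y \<partial>BM) + (\<integral>\<^sup>+y. D y \<partial>BM) * ?c"
  proof -
    have Dc: "(\<lambda>y. D y * ?c) \<in> borel_measurable BM" using measD by measurable
    show ?thesis by (simp add: nn_integral_add[OF Gm Dc] nn_integral_multc[OF measD])
  qed
  also have "(\<integral>\<^sup>+y. G sg k x y \<partial>BM) = occ M sg h x"
  proof -
    have "occ M sg (Suc k) x * indicator (LS (Suc k)) x = (\<integral>\<^sup>+y. G sg k x y \<partial>Mk k)" by (rule occ_ind[OF kk(3)])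
    then show ?thesis using x hk k by (simp add: Mk_def)
  qed
  also have "(\<integral>\<^sup>+y. D y \<partial>BM) * ?c \<le> ennreal (real (h - 2) * c0) * ?c"
    by (intro mult_right_mono Dle) simp
  finally show ?thesis using hk by (simp add: mult_ac)
qed

lemma final_bound': assumes h: "h \<in> {2..HH}" and x: "x \<in> LS h"
  shows "occ M ee h x \<le> occ M sg h x + ennreal (norm (mu M h x)) * ennreal (real (h - 2) * (\<eta> * (2 * sqrt (real CARD('d)) * real CARD('d))))"
  using final_bound[OF h x] unfolding c0_def .

end

end

theorem mainTheorem12:
  fixes M :: "('x, 'a, 'd::finite) lr_mdp"
    and P :: "('x \<Rightarrow> 'a \<Rightarrow> real) pmf"
    and h :: nat and \<alpha> \<eta> :: real
  assumes "low_rank_mdp M"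
    and "h \<in> {2..horizon M}"
    and "0 < \<alpha>" and "\<alpha> < 1" and "0 < \<eta>"
    and "finite (set_pmf P)"
    and "\<forall>\<pi>\<in>set_pmf P. markov_policy M \<pi>"
    and "rel_policy_cover M (map_pmf embed_policy P) \<alpha> \<eta> (trunc_policies M \<eta>) h"
  shows "policy_cover M P (\<alpha> / 2)
           (4 * real (horizon M) * real CARD('d) powr (3 / 2) * \<eta>) h"
proof -
  interpret L: lrm M by (rule lrm.intro) (rule assms(1))
  note h = assms(2)
  have eta: "0 \<le> \<eta>" using assms(5) by simp
  let ?d = "real CARD('d)"
  let ?H = "real (horizon M)"
  let ?eps = "4 * ?H * ?d powr (3 / 2) * \<eta>"
  have dpow: "?d powr (3/2) = sqrt ?d * ?d"
  proof -
    have "?d powr (3/2) = ?d powr (1/2 + 1)" by (simp add: field_simps)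
    also have "\<dots> = ?d powr (1/2) * ?d powr 1" by (rule powr_add)
    also have "\<dots> = sqrt ?d * ?d" by (simp add: powr_half_sqrt)
    finally show ?thesis .
  qed
  show ?thesis unfolding policy_cover_def
  proof (intro ballI impI)
    fix x assume x: "x \<in> layer_set M h"
    let ?ST = "SUP p\<in>trunc_policies M \<eta>. occ M p h x"
    let ?SUPt = "SUP \<pi>'\<in>{\<pi>. markov_policy M \<pi>}. occ M (embed_policy \<pi>') h x"
    let ?nm = "norm (mu M h x)"
    assume prem: "ennreal (?eps * ?nm) \<le> ?SUPt"
    let ?a = "ennreal (2 * ?H * ?d powr (3 / 2) * \<eta> * ?nm)"
    have bound: "occ M (embed_policy \<pi>) h x \<le> ?ST + ?a" if mp: "markov_policy M \<pi>" for \<pi>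
    proof -
      have fb: "occ M (embed_policy \<pi>) h x \<le> occ M (L.trS \<eta> (embed_policy \<pi>) (horizon M)) h x
           + ennreal ?nm * ennreal (real (h - 2) * (\<eta> * (2 * sqrt ?d * ?d)))"
        using L.final_bound'[OF mp eta h x] .
      obtain p where p: "p \<in> trunc_class M \<eta> (horizon M)"
        and dom: "\<forall>y\<in>space (base M). \<forall>a\<in>acts M. L.trS \<eta> (embed_policy \<pi>) (horizon M) y (Some a) \<le> p y (Some a) \<and> 0 \<le> p y (Some a)"
        using L.trS_class[OF L.embed_ext[OF mp], of \<eta> "horizon M"] by blast
      have "occ M (L.trS \<eta> (embed_policy \<pi>) (horizon M)) h x \<le> occ M p h x"
        by (rule L.occ_mono) (use dom in auto)
      also have "\<dots> \<le> ?ST" using p by (intro SUP_upper) (simp add: trunc_policies_def)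
      finally have t: "occ M (L.trS \<eta> (embed_policy \<pi>) (horizon M)) h x \<le> ?ST" .
      have "ennreal ?nm * ennreal (real (h - 2) * (\<eta> * (2 * sqrt ?d * ?d))) = ennreal (?nm * (real (h - 2) * (\<eta> * (2 * sqrt ?d * ?d))))"
        using eta by (simp add: ennreal_mult)
      also have "\<dots> \<le> ?a"
      proof (rule ennreal_leI)
        have "real (h - 2) \<le> ?H" using h by auto
        then have i1: "real (h - 2) * (\<eta> * (2 * sqrt ?d * ?d)) \<le> ?H * (\<eta> * (2 * sqrt ?d * ?d))"
          using eta by (intro mult_right_mono) auto
        have i2: "?nm * (real (h - 2) * (\<eta> * (2 * sqrt ?d * ?d))) \<le> ?nm * (?H * (\<eta> * (2 * sqrt ?d * ?d)))"
          by (rule mult_left_mono[OF i1]) simp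
        have e: "?nm * (?H * (\<eta> * (2 * sqrt ?d * ?d))) = 2 * ?H * (sqrt ?d * ?d) * \<eta> * ?nm"
          by (simp add: algebra_simps)
        show "?nm * (real (h - 2) * (\<eta> * (2 * sqrt ?d * ?d))) \<le> 2 * ?H * ?d powr (3 / 2) * \<eta> * ?nm"
          using i2 unfolding e dpow .
      qed
      finally show ?thesis using fb t by (meson add_mono order_trans)
    qed
    have sup_le: "?SUPt \<le> ?ST + ?a" by (rule SUP_least) (use bound in auto)
    have aa: "ennreal (?eps * ?nm) = ?a + ?a"
    proof -
      have nnA: "0 \<le> 2 * ?H * ?d powr (3 / 2) * \<eta> * ?nm" using eta by simp
      have "?eps * ?nm = 2 * ?H * ?d powr (3 / 2) * \<eta> * ?nm + 2 * ?H * ?d powr (3 / 2) * \<eta> * ?nm"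
        by (simp add: algebra_simps)
      then show ?thesis by (simp only:) (rule ennreal_plus[OF nnA nnA])
    qed
    have "?a + ?a \<le> ?SUPt" using prem unfolding aa .
    also have "\<dots> \<le> ?ST + ?a" by (rule sup_le)
    also have "\<dots> = ?a + ?ST" by (rule add.commute)
    finally have "?a + ?a \<le> ?a + ?ST" .
    then have aST: "?a \<le> ?ST" by (simp add: ennreal_add_left_cancel_le)
    have Hge: "2 \<le> ?H" using h by auto
    have dge: "1 \<le> ?d" by (simp add: Suc_le_eq)
    have "\<eta> * ?nm \<le> 2 * ?H * ?d powr (3 / 2) * \<eta> * ?nm"
    proof -
      have p1: "1 \<le> ?d powr (3/2)" by (rule ge_one_powr_ge_zero) (use dge in auto)
      have "1 * 1 \<le> (2 * ?H) * ?d powr (3/2)" by (rule mult_mono) (use Hge p1 in auto)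
      then have p2: "1 \<le> 2 * ?H * ?d powr (3/2)" by simp
      have "1 * (\<eta> * ?nm) \<le> (2 * ?H * ?d powr (3/2)) * (\<eta> * ?nm)"
        by (rule mult_right_mono[OF p2]) (use eta in simp)
      then show ?thesis by (simp add: mult.assoc)
    qed
    then have "ennreal (\<eta> * ?nm) \<le> ?ST" using aST by (meson ennreal_leI order_trans)
    then have cov: "ennreal \<alpha> * ?ST \<le> (\<integral>\<^sup>+\<pi>. occ M (embed_policy \<pi>) h x \<partial>measure_pmf P)"
      using assms(8) x unfolding rel_policy_cover_def by simp
    have "ennreal (\<alpha> / 2) * ?SUPt \<le> ennreal (\<alpha> / 2) * (?ST + ?ST)"
      using sup_le aST by (intro mult_left_mono) (auto intro: order_trans add_left_mono)
    also have "\<dots> = ennreal \<alpha> * ?ST"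
    proof -
      have "ennreal (\<alpha> / 2) * (?ST + ?ST) = ennreal (\<alpha> / 2) * (2 * ?ST)" by (simp add: mult_2)
      also have "\<dots> = (ennreal (\<alpha> / 2) * 2) * ?ST" by (simp add: mult.assoc)
      also have "ennreal (\<alpha> / 2) * 2 = ennreal \<alpha>"
      proof -
        have "ennreal (\<alpha> / 2) * 2 = ennreal (\<alpha> / 2) * ennreal 2" by simp
        also have "\<dots> = ennreal (\<alpha> / 2 * 2)" by (rule ennreal_mult[symmetric]) (use assms(3) in auto)
        finally show ?thesis by simp
      qed
      finally show ?thesis .
    qed
    finally show "ennreal (\<alpha> / 2) * ?SUPt \<le> (\<integral>\<^sup>+\<pi>. occ M (embed_policy \<pi>) h x \<partial>measure_pmf P)"
      using cov by simp
  qed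
qed


end
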